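(* Let $\mathcal{L}$ be a propositional language, $\mathcal{L}_1$ an expansion of $\mathcal{L}$ with induced quantale embedding $i:\wp\Sigma_{\mathcal{L}}\to\wp\Sigma_{\mathcal{L}_1}$, and $(D,\vdash)$ a deductive system over $\mathcal{L}$ with associated nucleus $\gamma$ and $\wp\Sigma_{\mathcal{L}}$-module of theories $\mathrm{Th}$. Let $D_1$ be the domain of the same type as $D$ over $\mathcal{L}_1$. Then there exists a consequence relation $\vdash_1$ on $\wp D_1$ whose $\wp\Sigma_{\mathcal{L}_1}$-module of theories $\mathrm{Th}_1$ is isomorphic to $\wp\Sigma_{\mathcal{L}_1}\otimes_{\wp\Sigma_{\mathcal{L}}}\mathrm{Th}$.
   Context: A quantale is a complete lattice with a monoid product distributing over arbitrary joins; a left $Q$-module is a complete lattice with an associative unital action distributing over joins in each argument; a $Q$-module nucleus is a closure operator $\gamma$ with $a\gamma(u)\le\gamma(au)$, with image a $Q$-module under join $\gamma(\bigvee\cdot)$ and action $\gamma(au)$. For a language $\mathcal{L}$ and fixed denumerable $\mathrm{Var}$: $\mathit{Fm}_{\mathcal{L}}$ term algebra, $\Sigma_{\mathcal{L}}$ monoid of substitutions, $\wp\Sigma_{\mathcal{L}}$ quantale of subsets (union, elementwise composition, unit $\{\mathrm{id}\}$). A domain is formulas, equations $\mathit{Fm}_{\mathcal{L}}^2$ or sequents $\bigcup_{(m,n)\in T}\mathit{Fm}_{\mathcal{L}}^m\times\mathit{Fm}_{\mathcal{L}}^n$; "same type" means the same kind (and same $T$). $\wp D$ is a left $\wp\Sigma_{\mathcal{L}}$-module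 via $\Sigma\cdot\Phi=\{\sigma(\varphi)\}$. A (structural) consequence relation corresponds to the nucleus $\gamma(\Phi)=\{\psi:\Phi\vdash\psi\}$ on $\wp D$ and has module of theories $(\wp D)_\gamma$. An expansion $\mathcal{L}_1$ contains all connectives of $\mathcal{L}$ with the same arities; $i$ maps each substitution to the unique $\mathcal{L}_1$-substitution with the same values on $\mathrm{Var}$, making $\wp\Sigma_{\mathcal{L}_1}$ a right $\wp\Sigma_{\mathcal{L}}$-module. The tensor product $M_1\otimes_Q M_2$ (right module $M_1$, left module $M_2$) is the quotient of the free sup-lattice $\wp(M_1\times M_2)$ by the sup-lattice congruence generated by $(\{(\bigvee X,y)\},\bigcup_{x\in X}\{(x,y)\})$, $(\{(x,\bigvee Y)\},\bigcup_{y\in Y}\{(x,y)\})$, $(\{(xa,y)\},\{(x,ay)\})$, a left $\wp\Sigma_{\mathcal{L}_1}$-module via the first factor. *)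

theory Defs
  imports Main
begin

text \<open>Formulas over a fixed denumerable set of variables (indexed by nat) and
 connectives of type 'c. A language is a partial map from connectives to arities.\<close>

datatype 'c fm = Var nat | App 'c "'c fm list"

type_synonym 'c lang = "'c \<Rightarrow> nat option"

inductive_set Fm :: "'c lang \<Rightarrow> 'c fm set" for L :: "'c lang" where
  Fm_Var: "Var v \<in> Fm L"
| Fm_App: "L c = Some (length xs) \<Longrightarrow> \<forall>x\<in>set xs. x \<in> Fm L \<Longrightarrow> App c xs \<in> Fm L"

definition expansion :: "'c lang \<Rightarrow> 'c lang \<Rightarrow> bool" where
  "expansion L L1 \<longleftrightarrow> L \<subseteq>\<^sub>m L1"

type_synonym 'c subst = "nat \<Rightarrow> 'c fm"

fun subst :: "'c subst \<Rightarrow> 'c fm \<Rightarrow> 'c fm" where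
  "subst \<sigma> (Var v) = \<sigma> v"
| "subst \<sigma> (App c xs) = App c (map (subst \<sigma>) xs)"

definition Subst :: "'c lang \<Rightarrow> 'c subst set" where
  "Subst L = {\<sigma>. \<forall>v. \<sigma> v \<in> Fm L}"

definition scomp :: "'c subst \<Rightarrow> 'c subst \<Rightarrow> 'c subst" where
  "scomp \<sigma> \<tau> = (\<lambda>v. subst \<sigma> (\<tau> v))"

definition qmult :: "'c subst set \<Rightarrow> 'c subst set \<Rightarrow> 'c subst set" where
  "qmult A B = {scomp \<sigma> \<tau> | \<sigma> \<tau>. \<sigma> \<in> A \<and> \<tau> \<in> B}"

text \<open>The map i: an L-substitution goes to the unique L1-substitution with the same
 values on the variables; with our representation this is the same function.\<close>
definition subst_embed :: "'c subst \<Rightarrow> 'c subst" where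
  "subst_embed \<sigma> = (\<lambda>v. \<sigma> v)"

definition qemb :: "'c subst set \<Rightarrow> 'c subst set" where
  "qemb A = subst_embed ` A"

text \<open>Elements of a domain are encoded as pairs of formula lists: a formula phi as
 ([phi],[]), an equation phi = psi as ([phi],[psi]), a sequent as (lhs, rhs).\<close>
type_synonym 'c elem = "'c fm list \<times> 'c fm list"

datatype dkind = Formulas | Equations | Sequents "(nat \<times> nat) set"

fun domain_of :: "dkind \<Rightarrow> 'c lang \<Rightarrow> 'c elem set" where
  "domain_of Formulas L = {([\<phi>], []) | \<phi>. \<phi> \<in> Fm L}"
| "domain_of Equations L = {([\<phi>], [\<psi>]) | \<phi> \<psi>. \<phi> \<in> Fm L \<and> \<psi> \<in> Fm L}"
| "domain_of (Sequents T) L = {(xs, ys). (length xs, length ys) \<in> T \<and>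
      set xs \<subseteq> Fm L \<and> set ys \<subseteq> Fm L}"

definition sact :: "'c subst \<Rightarrow> 'c elem \<Rightarrow> 'c elem" where
  "sact \<sigma> e = (map (subst \<sigma>) (fst e), map (subst \<sigma>) (snd e))"

definition sset :: "'c subst set \<Rightarrow> 'c elem set \<Rightarrow> 'c elem set" where
  "sset A \<Phi> = {sact \<sigma> \<phi> | \<sigma> \<phi>. \<sigma> \<in> A \<and> \<phi> \<in> \<Phi>}"

definition consequence_relation ::
  "'c lang \<Rightarrow> dkind \<Rightarrow> ('c elem set \<Rightarrow> 'c elem \<Rightarrow> bool) \<Rightarrow> bool" where
  "consequence_relation L K ent \<longleftrightarrow>
     (let D = domain_of K L in
       (\<forall>\<Phi> \<phi>. ent \<Phi> \<phi> \<longrightarrow> \<Phi> \<subseteq> D \<and> \<phi> \<in> D)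
     \<and> (\<forall>\<Phi> \<phi>. \<Phi> \<subseteq> D \<and> \<phi> \<in> \<Phi> \<longrightarrow> ent \<Phi> \<phi>)
     \<and> (\<forall>\<Phi> \<Psi> \<phi>. ent \<Phi> \<phi> \<and> \<Phi> \<subseteq> \<Psi> \<and> \<Psi> \<subseteq> D \<longrightarrow> ent \<Psi> \<phi>)
     \<and> (\<forall>\<Phi> \<Psi> \<phi>. \<Phi> \<subseteq> D \<and> (\<forall>\<psi>\<in>\<Psi>. ent \<Phi> \<psi>) \<and> ent \<Psi> \<phi> \<longrightarrow> ent \<Phi> \<phi>)
     \<and> (\<forall>\<Phi> \<phi> \<sigma>. ent \<Phi> \<phi> \<and> \<sigma> \<in> Subst L \<longrightarrow> ent (sset {\<sigma>} \<Phi>) (sact \<sigma> \<phi>)))"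

definition ccl :: "('c elem set \<Rightarrow> 'c elem \<Rightarrow> bool) \<Rightarrow> 'c elem set \<Rightarrow> 'c elem set" where
  "ccl ent \<Phi> = {\<psi>. ent \<Phi> \<psi>}"

definition theories :: "'c elem set \<Rightarrow> ('c elem set \<Rightarrow> 'c elem \<Rightarrow> bool) \<Rightarrow> 'c elem set set" where
  "theories D ent = {\<Phi>. \<Phi> \<subseteq> D \<and> ccl ent \<Phi> = \<Phi>}"

definition th_join :: "('c elem set \<Rightarrow> 'c elem \<Rightarrow> bool) \<Rightarrow> 'c elem set set \<Rightarrow> 'c elem set" where
  "th_join ent X = ccl ent (\<Union>X)"

definition th_act :: "('c elem set \<Rightarrow> 'c elem \<Rightarrow> bool) \<Rightarrow> 'c subst set \<Rightarrow> 'c elem set \<Rightarrow> 'c elem set" where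
  "th_act ent A \<Phi> = ccl ent (sset A \<Phi>)"

definition suplat_cong :: "'a set \<Rightarrow> ('a set \<times> 'a set) set \<Rightarrow> bool" where
  "suplat_cong S R \<longleftrightarrow> equiv (Pow S) R \<and>
     (\<forall>I. I \<subseteq> R \<longrightarrow> (\<Union>(fst ` I), \<Union>(snd ` I)) \<in> R)"

definition cong_gen :: "'a set \<Rightarrow> ('a set \<times> 'a set) set \<Rightarrow> ('a set \<times> 'a set) set" where
  "cong_gen S G = \<Inter>{R. suplat_cong S R \<and> G \<subseteq> R}"

type_synonym 'c tpair = "'c subst set \<times> 'c elem set"

definition tensor_gens :: "'c lang \<Rightarrow> 'c lang \<Rightarrow> dkind \<Rightarrow> ('c elem set \<Rightarrow> 'c elem \<Rightarrow> bool)
    \<Rightarrow> ('c tpair set \<times> 'c tpair set) set" where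
  "tensor_gens L L1 K ent =
     (let M1 = Pow (Subst L1); M2 = theories (domain_of K L) ent in
       {({(\<Union>Xs, y)}, (\<lambda>x. (x, y)) ` Xs) | Xs y. Xs \<subseteq> M1 \<and> y \<in> M2}
     \<union> {({(x, th_join ent Ys)}, (\<lambda>y. (x, y)) ` Ys) | x Ys. x \<in> M1 \<and> Ys \<subseteq> M2}
     \<union> {({(qmult x (qemb a), y)}, {(x, th_act ent a y)}) | x a y.
           x \<in> M1 \<and> a \<in> Pow (Subst L) \<and> y \<in> M2})"

definition tensor_rel :: "'c lang \<Rightarrow> 'c lang \<Rightarrow> dkind \<Rightarrow> ('c elem set \<Rightarrow> 'c elem \<Rightarrow> bool)
    \<Rightarrow> ('c tpair set \<times> 'c tpair set) set" where
  "tensor_rel L L1 K ent =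
     cong_gen (Pow (Subst L1) \<times> theories (domain_of K L) ent) (tensor_gens L L1 K ent)"

definition tensor_carrier :: "'c lang \<Rightarrow> 'c lang \<Rightarrow> dkind \<Rightarrow> ('c elem set \<Rightarrow> 'c elem \<Rightarrow> bool)
    \<Rightarrow> 'c tpair set set set" where
  "tensor_carrier L L1 K ent =
     Pow (Pow (Subst L1) \<times> theories (domain_of K L) ent) // tensor_rel L L1 K ent"

definition tensor_join :: "'c lang \<Rightarrow> 'c lang \<Rightarrow> dkind \<Rightarrow> ('c elem set \<Rightarrow> 'c elem \<Rightarrow> bool)
    \<Rightarrow> 'c tpair set set set \<Rightarrow> 'c tpair set set" where
  "tensor_join L L1 K ent Cs =
     tensor_rel L L1 K ent `` {\<Union>C\<in>Cs. (SOME X. X \<in> C)}"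

definition tensor_act :: "'c lang \<Rightarrow> 'c lang \<Rightarrow> dkind \<Rightarrow> ('c elem set \<Rightarrow> 'c elem \<Rightarrow> bool)
    \<Rightarrow> 'c subst set \<Rightarrow> 'c tpair set set \<Rightarrow> 'c tpair set set" where
  "tensor_act L L1 K ent a C =
     tensor_rel L L1 K ent `` {{(qmult a x, y) | x y. (x, y) \<in> (SOME X. X \<in> C)}}"

definition module_iso :: "'q set \<Rightarrow> 'a set \<Rightarrow> ('a set \<Rightarrow> 'a) \<Rightarrow> ('q \<Rightarrow> 'a \<Rightarrow> 'a)
    \<Rightarrow> 'b set \<Rightarrow> ('b set \<Rightarrow> 'b) \<Rightarrow> ('q \<Rightarrow> 'b \<Rightarrow> 'b) \<Rightarrow> ('a \<Rightarrow> 'b) \<Rightarrow> bool" where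
  "module_iso Q A joinA actA B joinB actB f \<longleftrightarrow>
     bij_betw f A B
   \<and> (\<forall>X. X \<subseteq> A \<longrightarrow> f (joinA X) = joinB (f ` X))
   \<and> (\<forall>q\<in>Q. \<forall>x\<in>A. f (actA q x) = actB q (f x))"

end

theory Submission
  imports Defs
begin

lemma subst_comp: "subst \<sigma> (subst \<tau> \<phi>) = subst (scomp \<sigma> \<tau>) \<phi>"
  by (induction \<phi>) (auto simp: scomp_def)

lemma scomp_assoc: "scomp (scomp a b) c = scomp a (scomp b c)"
  by (auto simp: scomp_def subst_comp fun_eq_iff)

lemma subst_Fm: "\<phi> \<in> Fm L \<Longrightarrow> \<sigma> \<in> Subst L \<Longrightarrow> subst \<sigma> \<phi> \<in> Fm L"
  by (induction rule: Fm.induct) (auto simp: Subst_def intro!: Fm.intros)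

lemma Fm_mono: "\<phi> \<in> Fm L \<Longrightarrow> expansion L L1 \<Longrightarrow> \<phi> \<in> Fm L1"
proof (induction rule: Fm.induct)
  case (Fm_Var v) show ?case by (rule Fm.Fm_Var)
next
  case (Fm_App c xs)
  then have "L1 c = Some (length xs)" unfolding expansion_def map_le_def by (metis domI)
  then show ?case using Fm_App by (auto intro!: Fm.Fm_App)
qed

lemma Subst_mono: "expansion L L1 \<Longrightarrow> \<sigma> \<in> Subst L \<Longrightarrow> \<sigma> \<in> Subst L1"
  by (auto simp: Subst_def intro: Fm_mono)

lemma Var_Subst: "Var \<in> Subst L"
  by (auto simp: Subst_def intro: Fm.intros)

lemma sset_iff: "x \<in> sset A \<Phi> \<longleftrightarrow> (\<exists>\<sigma>\<in>A. \<exists>\<phi>\<in>\<Phi>. x = sact \<sigma> \<phi>)"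
  unfolding sset_def by blast

lemma sset_I: "\<sigma> \<in> A \<Longrightarrow> \<phi> \<in> \<Phi> \<Longrightarrow> sact \<sigma> \<phi> \<in> sset A \<Phi>"
  unfolding sset_def by blast

lemma sset_E: "x \<in> sset A \<Phi> \<Longrightarrow> (\<And>\<sigma> \<phi>. \<sigma> \<in> A \<Longrightarrow> \<phi> \<in> \<Phi> \<Longrightarrow> x = sact \<sigma> \<phi> \<Longrightarrow> P) \<Longrightarrow> P"
  unfolding sset_def by blast

lemma qmult_iff: "x \<in> qmult A B \<longleftrightarrow> (\<exists>\<sigma>\<in>A. \<exists>\<tau>\<in>B. x = scomp \<sigma> \<tau>)"
  unfolding qmult_def by blast

lemma scomp_Subst: "\<sigma> \<in> Subst L \<Longrightarrow> \<tau> \<in> Subst L \<Longrightarrow> scomp \<sigma> \<tau> \<in> Subst L"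
  by (auto simp: Subst_def scomp_def subst_Fm)

lemma sact_comp: "sact \<sigma> (sact \<tau> e) = sact (scomp \<sigma> \<tau>) e"
  by (auto simp: sact_def subst_comp)

lemma sact_domain: "d \<in> domain_of K L \<Longrightarrow> \<sigma> \<in> Subst L \<Longrightarrow> sact \<sigma> d \<in> domain_of K L"
  by (cases K) (auto simp: sact_def subst_Fm)

lemma domain_mono: "expansion L L1 \<Longrightarrow> domain_of K L \<subseteq> domain_of K L1"
  by (cases K) (auto intro: Fm_mono)

lemma sset_domain: "\<Phi> \<subseteq> domain_of K L \<Longrightarrow> A \<subseteq> Subst L \<Longrightarrow> sset A \<Phi> \<subseteq> domain_of K L"
  unfolding sset_iff subset_iff by (blast intro: sact_domain)

lemma sset_qmult: "sset (qmult a b) \<Phi> = sset a (sset b \<Phi>)"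
proof (intro set_eqI iffI)
  fix x assume "x \<in> sset (qmult a b) \<Phi>"
  then obtain \<sigma>' \<phi> where 1: "\<sigma>' \<in> qmult a b" "\<phi> \<in> \<Phi>" "x = sact \<sigma>' \<phi>"
    using sset_iff[of x "qmult a b" \<Phi>] by blast
  then obtain \<sigma> \<tau> where 2: "\<sigma> \<in> a" "\<tau> \<in> b" "\<sigma>' = scomp \<sigma> \<tau>"
    using qmult_iff[of \<sigma>' a b] by blast
  have 3: "sact \<tau> \<phi> \<in> sset b \<Phi>" using 1 2 by (simp add: sset_I)
  have "x = sact \<sigma> (sact \<tau> \<phi>)" using 1 2 by (simp add: sact_comp)
  then show "x \<in> sset a (sset b \<Phi>)" using sset_I[OF 2(1) 3] by (simp only:)
next
  fix x assume "x \<in> sset a (sset b \<Phi>)"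
  then obtain \<sigma> \<psi> where 1: "\<sigma> \<in> a" "\<psi> \<in> sset b \<Phi>" "x = sact \<sigma> \<psi>"
    using sset_iff[of x a "sset b \<Phi>"] by blast
  then obtain \<tau> \<phi> where 2: "\<tau> \<in> b" "\<phi> \<in> \<Phi>" "\<psi> = sact \<tau> \<phi>"
    using sset_iff[of \<psi> b \<Phi>] by blast
  have 3: "scomp \<sigma> \<tau> \<in> qmult a b" using 1 2 qmult_iff[of "scomp \<sigma> \<tau>" a b] by blast
  have "x = sact (scomp \<sigma> \<tau>) \<phi>" using 1 2 by (simp add: sact_comp)
  then show "x \<in> sset (qmult a b) \<Phi>" using sset_I[OF 3 2(2)] by (simp only:)
qed

lemma qemb_id[simp]: "qemb a = a"
  by (simp add: qemb_def subst_embed_def)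

lemma qmult_single: "qmult {\<rho>} {\<tau>} = {scomp \<rho> \<tau>}"
  unfolding set_eq_iff qmult_iff by blast

lemma qmult_Subst: "a \<subseteq> Subst L \<Longrightarrow> b \<subseteq> Subst L \<Longrightarrow> qmult a b \<subseteq> Subst L"
  unfolding qmult_iff subset_iff by (blast intro: scomp_Subst)

lemma sset_Union: "sset (\<Union>Xs) y = (\<Union>x\<in>Xs. sset x y)"
  by (rule set_eqI) (auto simp: sset_iff simp del: split_paired_Ex split_paired_All)

lemma sset_Union2: "sset x (\<Union>Ys) = (\<Union>y\<in>Ys. sset x y)"
  by (rule set_eqI) (auto simp: sset_iff simp del: split_paired_Ex split_paired_All)

lemma sset_single: "sset {\<sigma>} {d} = {sact \<sigma> d}"
  by (auto simp: sset_iff)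

lemma sset_mono: "a \<subseteq> b \<Longrightarrow> \<Phi> \<subseteq> \<Psi> \<Longrightarrow> sset a \<Phi> \<subseteq> sset b \<Psi>"
  by (auto elim!: sset_E intro!: sset_I)

lemma cr_D: assumes "consequence_relation L K ent" "ent \<Phi> \<phi>" shows "\<Phi> \<subseteq> domain_of K L \<and> \<phi> \<in> domain_of K L"
  using assms(1)[unfolded consequence_relation_def Let_def, THEN conjunct1] assms(2) by blast

lemma cr_refl: assumes "consequence_relation L K ent" "\<Phi> \<subseteq> domain_of K L" "\<phi> \<in> \<Phi>" shows "ent \<Phi> \<phi>"
  using assms(1)[unfolded consequence_relation_def Let_def, THEN conjunct2, THEN conjunct1] assms(2,3) by blast

lemma cr_mono: assumes "consequence_relation L K ent" "ent \<Phi> \<phi>" "\<Phi> \<subseteq> \<Psi>" "\<Psi> \<subseteq> domain_of K L" shows "ent \<Psi> \<phi>"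
  using assms(1)[unfolded consequence_relation_def Let_def, THEN conjunct2, THEN conjunct2, THEN conjunct1] assms(2-4) by blast

lemma cr_cut: assumes "consequence_relation L K ent" "\<Phi> \<subseteq> domain_of K L" "\<forall>\<psi>\<in>\<Psi>. ent \<Phi> \<psi>" "ent \<Psi> \<phi>" shows "ent \<Phi> \<phi>"
  using assms(1)[unfolded consequence_relation_def Let_def, THEN conjunct2, THEN conjunct2, THEN conjunct2, THEN conjunct1] assms(2-4) by blast

lemma cr_struct: assumes "consequence_relation L K ent" "ent \<Phi> \<phi>" "\<sigma> \<in> Subst L" shows "ent (sset {\<sigma>} \<Phi>) (sact \<sigma> \<phi>)"
  using assms(1)[unfolded consequence_relation_def Let_def, THEN conjunct2, THEN conjunct2, THEN conjunct2, THEN conjunct2] assms(2,3) by blast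

context
  fixes L :: "'c lang" and K ent
  assumes cr: "consequence_relation L K ent"
begin

lemma ccl_sub: "ccl ent \<Phi> \<subseteq> domain_of K L"
  using cr_D[OF cr] by (auto simp: ccl_def)

lemma ccl_ext: "\<Phi> \<subseteq> domain_of K L \<Longrightarrow> \<Phi> \<subseteq> ccl ent \<Phi>"
  using cr_refl[OF cr] by (auto simp: ccl_def)

lemma ccl_mono: "\<Phi> \<subseteq> \<Psi> \<Longrightarrow> \<Psi> \<subseteq> domain_of K L \<Longrightarrow> ccl ent \<Phi> \<subseteq> ccl ent \<Psi>"
  using cr_mono[OF cr] by (auto simp: ccl_def)

lemma ccl_out: "\<not> \<Phi> \<subseteq> domain_of K L \<Longrightarrow> ccl ent \<Phi> = {}"
  using cr_D[OF cr] by (auto simp: ccl_def)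

lemma ccl_least: assumes "A \<subseteq> ccl ent B" "B \<subseteq> domain_of K L" shows "ccl ent A \<subseteq> ccl ent B"
proof
  fix x assume "x \<in> ccl ent A"
  then show "x \<in> ccl ent B" using cr_cut[OF cr, of B A x] assms by (auto simp: ccl_def)
qed

lemma ccl_idem: "\<Phi> \<subseteq> domain_of K L \<Longrightarrow> ccl ent (ccl ent \<Phi>) = ccl ent \<Phi>"
  by (meson ccl_ext ccl_least ccl_sub order_refl subset_antisym)

lemma ccl_theory: "\<Phi> \<subseteq> domain_of K L \<Longrightarrow> ccl ent \<Phi> \<in> theories (domain_of K L) ent"
  by (simp add: theories_def ccl_idem ccl_sub)

lemma ccl_Union: "(\<And>i. i \<in> I \<Longrightarrow> A i \<subseteq> domain_of K L) \<Longrightarrow>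
   ccl ent (\<Union>i\<in>I. ccl ent (A i)) = ccl ent (\<Union>i\<in>I. A i)"
proof (rule subset_antisym)
  assume a: "\<And>i. i \<in> I \<Longrightarrow> A i \<subseteq> domain_of K L"
  then have u: "(\<Union>i\<in>I. A i) \<subseteq> domain_of K L" by blast
  have "(\<Union>i\<in>I. ccl ent (A i)) \<subseteq> ccl ent (\<Union>i\<in>I. A i)"
    using ccl_mono[OF _ u] by blast
  then show "ccl ent (\<Union>i\<in>I. ccl ent (A i)) \<subseteq> ccl ent (\<Union>i\<in>I. A i)"
    using ccl_least u by blast
  have "(\<Union>i\<in>I. A i) \<subseteq> (\<Union>i\<in>I. ccl ent (A i))" using ccl_ext a by blast
  moreover have "(\<Union>i\<in>I. ccl ent (A i)) \<subseteq> domain_of K L" using ccl_sub by blast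
  ultimately show "ccl ent (\<Union>i\<in>I. A i) \<subseteq> ccl ent (\<Union>i\<in>I. ccl ent (A i))"
    using ccl_mono by blast
qed

lemma ccl_sset: "A \<subseteq> Subst L \<Longrightarrow> \<Phi> \<subseteq> domain_of K L \<Longrightarrow> sset A (ccl ent \<Phi>) \<subseteq> ccl ent (sset A \<Phi>)"
proof
  fix x assume A: "A \<subseteq> Subst L" and P: "\<Phi> \<subseteq> domain_of K L" and x: "x \<in> sset A (ccl ent \<Phi>)"
  then obtain \<sigma> \<phi> where s: "\<sigma> \<in> A" "ent \<Phi> \<phi>" "x = sact \<sigma> \<phi>"
    by (auto elim!: sset_E simp: ccl_def)
  then have "ent (sset {\<sigma>} \<Phi>) x" using cr_struct[OF cr] A by blast
  moreover have "sset {\<sigma>} \<Phi> \<subseteq> sset A \<Phi>" using s by (intro sset_mono) auto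
  moreover have "sset A \<Phi> \<subseteq> domain_of K L" using sset_domain A P by blast
  ultimately show "x \<in> ccl ent (sset A \<Phi>)" using cr_mono[OF cr] by (auto simp: ccl_def)
qed

lemma ccl_sset_eq: "A \<subseteq> Subst L \<Longrightarrow> \<Phi> \<subseteq> domain_of K L \<Longrightarrow> ccl ent (sset A (ccl ent \<Phi>)) = ccl ent (sset A \<Phi>)"
proof (rule subset_antisym)
  assume A: "A \<subseteq> Subst L" and P: "\<Phi> \<subseteq> domain_of K L"
  have d: "sset A \<Phi> \<subseteq> domain_of K L" using sset_domain A P by blast
  show "ccl ent (sset A (ccl ent \<Phi>)) \<subseteq> ccl ent (sset A \<Phi>)"
    using ccl_least[OF ccl_sset[OF A P] d] .
  show "ccl ent (sset A \<Phi>) \<subseteq> ccl ent (sset A (ccl ent \<Phi>))"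
    by (rule ccl_mono[OF sset_mono[OF order_refl ccl_ext[OF P]] sset_domain[OF ccl_sub A]])
qed

lemma theories_iff: "\<Phi> \<in> theories (domain_of K L) ent \<longleftrightarrow> \<Phi> \<subseteq> domain_of K L \<and> ccl ent \<Phi> = \<Phi>"
  by (simp add: theories_def)

end

lemma suplat_cong_Inter:
  assumes "F \<noteq> {}" "\<And>R. R \<in> F \<Longrightarrow> suplat_cong S R"
  shows "suplat_cong S (\<Inter>F)"
proof -
  have e: "\<And>R. R \<in> F \<Longrightarrow> equiv (Pow S) R" and u: "\<And>R I. R \<in> F \<Longrightarrow> I \<subseteq> R \<Longrightarrow> (\<Union>(fst ` I), \<Union>(snd ` I)) \<in> R"
    using assms(2) unfolding suplat_cong_def by blast+
  obtain R0 where R0: "R0 \<in> F" using assms(1) by blast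
  have "equiv (Pow S) (\<Inter>F)"
  proof (rule equivI)
    show "\<Inter>F \<subseteq> Pow S \<times> Pow S" using e[OF R0] R0 unfolding equiv_def by blast
    show "refl_on (Pow S) (\<Inter>F)" using e unfolding equiv_def refl_on_def by blast
    show "sym (\<Inter>F)" using e unfolding equiv_def sym_def by blast
    show "trans (\<Inter>F)" using e unfolding equiv_def trans_def by blast
  qed
  moreover have "\<forall>I. I \<subseteq> \<Inter>F \<longrightarrow> (\<Union>(fst ` I), \<Union>(snd ` I)) \<in> \<Inter>F"
    using u by blast
  ultimately show ?thesis unfolding suplat_cong_def by blast
qed

lemma suplat_cong_full: "suplat_cong S (Pow S \<times> Pow S)"
  unfolding suplat_cong_def equiv_def refl_on_def sym_def trans_def by (auto 0 3)

lemma cong_gen_cong: "G \<subseteq> Pow S \<times> Pow S \<Longrightarrow> suplat_cong S (cong_gen S G)"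
  unfolding cong_gen_def by (rule suplat_cong_Inter) (use suplat_cong_full[of S] in blast)+

lemma cong_gen_sub: "G \<subseteq> cong_gen S G"
  unfolding cong_gen_def by blast

lemma cong_gen_least: "suplat_cong S R \<Longrightarrow> G \<subseteq> R \<Longrightarrow> cong_gen S G \<subseteq> R"
  unfolding cong_gen_def by blast

context
  fixes S :: "'a set" and R
  assumes sc: "suplat_cong S R"
begin

lemma R_equiv: "equiv (Pow S) R" using sc unfolding suplat_cong_def by blast

lemma R_refl: "P \<subseteq> S \<Longrightarrow> (P, P) \<in> R"
  using R_equiv unfolding equiv_def refl_on_def by blast

lemma R_sub: "(P, Q) \<in> R \<Longrightarrow> P \<subseteq> S \<and> Q \<subseteq> S"
  using R_equiv unfolding equiv_def by blast

lemma R_sym: "(P, Q) \<in> R \<Longrightarrow> (Q, P) \<in> R"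
  using R_equiv unfolding equiv_def sym_def by blast

lemma R_trans: "(P, Q) \<in> R \<Longrightarrow> (Q, W) \<in> R \<Longrightarrow> (P, W) \<in> R"
  using R_equiv unfolding equiv_def trans_def by blast

lemma R_Union: "I \<subseteq> R \<Longrightarrow> (\<Union>(fst ` I), \<Union>(snd ` I)) \<in> R"
  using sc unfolding suplat_cong_def by blast

lemma R_union2: "(A, B) \<in> R \<Longrightarrow> (C, E) \<in> R \<Longrightarrow> (A \<union> C, B \<union> E) \<in> R"
  using R_Union[of "{(A, B), (C, E)}"] by simp

lemma R_UN: "(\<And>i. i \<in> I \<Longrightarrow> (f i, g i) \<in> R) \<Longrightarrow> ((\<Union>i\<in>I. f i), (\<Union>i\<in>I. g i)) \<in> R"
  using R_Union[of "(\<lambda>i. (f i, g i)) ` I"] by (simp add: image_image) blast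

definition le :: "'a set \<Rightarrow> 'a set \<Rightarrow> bool" where
  "le P Q \<longleftrightarrow> (P \<union> Q, Q) \<in> R"

lemma le_R: "(P, Q) \<in> R \<Longrightarrow> le P Q"
  unfolding le_def using R_union2[of P Q Q Q] R_refl R_sub by auto

lemma le_subset: "P \<subseteq> Q \<Longrightarrow> Q \<subseteq> S \<Longrightarrow> le P Q"
  unfolding le_def using R_refl by (simp add: Un_absorb1)

lemma le_trans: assumes "le P Q" "le Q W" shows "le P W"
proof -
  have h1: "(P \<union> Q, Q) \<in> R" and h2: "(Q \<union> W, W) \<in> R" using assms unfolding le_def by auto
  have W: "W \<subseteq> S" and PQ: "P \<union> Q \<subseteq> S" using R_sub h1 h2 by auto
  have "(P \<union> Q \<union> W, Q \<union> W) \<in> R" using R_union2[OF h1 R_refl[OF W]] .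
  then have a: "(P \<union> Q \<union> W, W) \<in> R" using R_trans h2 by blast
  have "(P \<union> W \<union> W, P \<union> W \<union> (Q \<union> W)) \<in> R"
    using R_union2[OF R_refl[of "P \<union> W"] R_sym[OF h2]] W PQ by auto
  then have "(P \<union> W, P \<union> Q \<union> W) \<in> R" by (simp add: Un_ac)
  then show ?thesis using a R_trans unfolding le_def by blast
qed

lemma le_UN: assumes "\<And>i. i \<in> I \<Longrightarrow> le (f i) Q" "Q \<subseteq> S" shows "le (\<Union>i\<in>I. f i) Q"
proof -
  have "((\<Union>i\<in>I. f i \<union> Q) \<union> Q, (\<Union>i\<in>I. Q) \<union> Q) \<in> R"
    using R_union2[OF R_UN[of I "\<lambda>i. f i \<union> Q" "\<lambda>i. Q"] R_refl[OF assms(2)]] assms(1) unfolding le_def by blast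
  moreover have "(\<Union>i\<in>I. f i \<union> Q) \<union> Q = (\<Union>i\<in>I. f i) \<union> Q" "(\<Union>i\<in>I. Q) \<union> Q = Q" by auto
  ultimately show ?thesis unfolding le_def by simp
qed

lemma le_antisym: assumes "le P Q" "le Q P" shows "(P, Q) \<in> R"
proof -
  have "(P \<union> Q, Q) \<in> R" "(Q \<union> P, P) \<in> R" using assms unfolding le_def by auto
  then show ?thesis using R_sym R_trans by (metis sup_commute)
qed

lemma le_sub: "le P Q \<Longrightarrow> P \<subseteq> S \<and> Q \<subseteq> S"
  unfolding le_def using R_sub by blast

end

locale ext =
  fixes L L1 :: "'c lang" and K :: dkind and ent :: "'c elem set \<Rightarrow> 'c elem \<Rightarrow> bool"
  assumes exp: "expansion L L1" and cr: "consequence_relation L K ent"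
begin

definition closed1 :: "'c elem set \<Rightarrow> bool" where
  "closed1 C \<longleftrightarrow> C \<subseteq> domain_of K L1 \<and>
     (\<forall>\<rho> \<Psi> \<chi>. \<rho> \<in> Subst L1 \<and> ent \<Psi> \<chi> \<and> sset {\<rho>} \<Psi> \<subseteq> C \<longrightarrow> sact \<rho> \<chi> \<in> C)"

definition ent1 :: "'c elem set \<Rightarrow> 'c elem \<Rightarrow> bool" where
  "ent1 \<Phi> \<psi> \<longleftrightarrow> \<Phi> \<subseteq> domain_of K L1 \<and> \<psi> \<in> domain_of K L1 \<and>
     (\<forall>C. closed1 C \<and> \<Phi> \<subseteq> C \<longrightarrow> \<psi> \<in> C)"

lemma DD1: "domain_of K L \<subseteq> domain_of K L1"
  using domain_mono[OF exp] .

lemma SS1: "Subst L \<subseteq> Subst L1"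
  using Subst_mono[OF exp] by blast

lemma closed1I:
  assumes "C \<subseteq> domain_of K L1"
    and "\<And>\<rho> \<Psi> \<chi>. \<rho> \<in> Subst L1 \<Longrightarrow> ent \<Psi> \<chi> \<Longrightarrow> sset {\<rho>} \<Psi> \<subseteq> C \<Longrightarrow> sact \<rho> \<chi> \<in> C"
  shows "closed1 C"
  using assms unfolding closed1_def by blast

lemma closed1D: "closed1 C \<Longrightarrow> \<rho> \<in> Subst L1 \<Longrightarrow> ent \<Psi> \<chi> \<Longrightarrow> sset {\<rho>} \<Psi> \<subseteq> C \<Longrightarrow> sact \<rho> \<chi> \<in> C"
  unfolding closed1_def by blast

lemma cr1: "consequence_relation L1 K ent1"
  unfolding consequence_relation_def Let_def
proof (intro conjI allI impI)
  show "ent1 \<Phi> \<phi> \<Longrightarrow> \<Phi> \<subseteq> domain_of K L1" for \<Phi> \<phi> unfolding ent1_def by blast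
  show "ent1 \<Phi> \<phi> \<Longrightarrow> \<phi> \<in> domain_of K L1" for \<Phi> \<phi> unfolding ent1_def by blast
  show "\<Phi> \<subseteq> domain_of K L1 \<and> \<phi> \<in> \<Phi> \<Longrightarrow> ent1 \<Phi> \<phi>" for \<Phi> \<phi> unfolding ent1_def by blast
  show "ent1 \<Phi> \<phi> \<and> \<Phi> \<subseteq> \<Psi> \<and> \<Psi> \<subseteq> domain_of K L1 \<Longrightarrow> ent1 \<Psi> \<phi>" for \<Phi> \<Psi> \<phi>
    unfolding ent1_def by blast
  show "\<Phi> \<subseteq> domain_of K L1 \<and> (\<forall>\<psi>\<in>\<Psi>. ent1 \<Phi> \<psi>) \<and> ent1 \<Psi> \<phi> \<Longrightarrow> ent1 \<Phi> \<phi>" for \<Phi> \<Psi> \<phi>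
    unfolding ent1_def by blast
  fix \<Phi> \<phi> \<sigma>
  assume a: "ent1 \<Phi> \<phi> \<and> \<sigma> \<in> Subst L1"
  then have P: "\<Phi> \<subseteq> domain_of K L1" and p: "\<phi> \<in> domain_of K L1" and s: "\<sigma> \<in> Subst L1"
    and h: "\<And>C. closed1 C \<Longrightarrow> \<Phi> \<subseteq> C \<Longrightarrow> \<phi> \<in> C"
    unfolding ent1_def by blast+
  show "ent1 (sset {\<sigma>} \<Phi>) (sact \<sigma> \<phi>)"
    unfolding ent1_def
  proof (intro conjI allI impI)
    show "sset {\<sigma>} \<Phi> \<subseteq> domain_of K L1" using sset_domain[OF P] s by blast
    show "sact \<sigma> \<phi> \<in> domain_of K L1" using sact_domain[OF p s] .
    fix C assume C: "closed1 C \<and> sset {\<sigma>} \<Phi> \<subseteq> C"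
    define C' where "C' = {d \<in> domain_of K L1. sact \<sigma> d \<in> C}"
    have "closed1 C'"
    proof (rule closed1I)
      show "C' \<subseteq> domain_of K L1" unfolding C'_def by blast
      fix \<rho> \<Psi> \<chi> assume r: "\<rho> \<in> Subst L1" and e: "ent \<Psi> \<chi>" and sub: "sset {\<rho>} \<Psi> \<subseteq> C'"
      have "sset {scomp \<sigma> \<rho>} \<Psi> \<subseteq> C"
      proof
        fix x assume "x \<in> sset {scomp \<sigma> \<rho>} \<Psi>"
        then obtain \<psi> where "\<psi> \<in> \<Psi>" "x = sact (scomp \<sigma> \<rho>) \<psi>" by (auto elim!: sset_E)
        moreover have "sact \<rho> \<psi> \<in> C'" using sub \<open>\<psi> \<in> \<Psi>\<close> sset_I[of \<rho> "{\<rho>}" \<psi> \<Psi>] by blast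
        ultimately show "x \<in> C" unfolding C'_def by (simp add: sact_comp)
      qed
      then have "sact (scomp \<sigma> \<rho>) \<chi> \<in> C"
        using closed1D[of C "scomp \<sigma> \<rho>" \<Psi> \<chi>] C e scomp_Subst[OF s r] by blast
      moreover have "sact \<rho> \<chi> \<in> domain_of K L1"
        using sact_domain[OF _ r] DD1 cr_D[OF cr e] by blast
      ultimately show "sact \<rho> \<chi> \<in> C'" unfolding C'_def by (simp add: sact_comp)
    qed
    moreover have "\<Phi> \<subseteq> C'" unfolding C'_def using P C sset_I[of \<sigma> "{\<sigma>}" _ \<Phi>] by blast
    ultimately have "\<phi> \<in> C'" using h by blast
    then show "sact \<sigma> \<phi> \<in> C" unfolding C'_def by blast
  qed
qed

lemma mix_sub:
  assumes x: "x \<subseteq> Subst L1" and U: "U \<subseteq> domain_of K L"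
  shows "sset x (ccl ent U) \<subseteq> ccl ent1 (sset x U)"
proof
  fix e assume "e \<in> sset x (ccl ent U)"
  then obtain \<rho> \<chi> where r: "\<rho> \<in> x" and c: "ent U \<chi>" and e: "e = sact \<rho> \<chi>"
    by (auto elim!: sset_E simp: ccl_def)
  have xU: "sset x U \<subseteq> domain_of K L1" using sset_domain[of U K L1 x] U DD1 x by blast
  have "\<chi> \<in> domain_of K L1" using cr_D[OF cr c] DD1 by blast
  then have ed: "e \<in> domain_of K L1" using e sact_domain r x by blast
  have "ent1 (sset x U) e"
    unfolding ent1_def
  proof (intro conjI allI impI xU ed)
    fix C assume C: "closed1 C \<and> sset x U \<subseteq> C"
    have "sset {\<rho>} U \<subseteq> C" using C r sset_mono[of "{\<rho>}" x U U] by blast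
    then show "e \<in> C" using closed1D[of C \<rho> U \<chi>] C c r x e by blast
  qed
  then show "e \<in> ccl ent1 (sset x U)" by (simp add: ccl_def)
qed

lemma mix_eq:
  assumes x: "x \<subseteq> Subst L1" and U: "U \<subseteq> domain_of K L"
  shows "ccl ent1 (sset x (ccl ent U)) = ccl ent1 (sset x U)"
proof (rule subset_antisym)
  have xU: "sset x U \<subseteq> domain_of K L1" using sset_domain[of U K L1 x] U DD1 x by blast
  show "ccl ent1 (sset x (ccl ent U)) \<subseteq> ccl ent1 (sset x U)"
    by (rule ccl_least[OF cr1 mix_sub[OF x U] xU])
  have "sset x (ccl ent U) \<subseteq> domain_of K L1"
    using sset_domain[of "ccl ent U" K L1 x] ccl_sub[OF cr] DD1 x by blast
  then show "ccl ent1 (sset x U) \<subseteq> ccl ent1 (sset x (ccl ent U))"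
    by (rule ccl_mono[OF cr1 sset_mono[OF order_refl ccl_ext[OF cr U]]])
qed

end

context ext
begin

abbreviation Th where "Th \<equiv> theories (domain_of K L) ent"
abbreviation SS where "SS \<equiv> Pow (Subst L1) \<times> Th"
abbreviation RR where "RR \<equiv> tensor_rel L L1 K ent"

definition tval :: "'c tpair set \<Rightarrow> 'c elem set" where
  "tval P = (\<Union>p\<in>P. sset (fst p) (snd p))"

lemma Th_sub: "y \<in> Th \<Longrightarrow> y \<subseteq> domain_of K L"
  by (simp add: theories_def)

lemma th_join_Th: assumes "Ys \<subseteq> Th" shows "th_join ent Ys \<in> Th"
proof -
  have "\<Union>Ys \<subseteq> domain_of K L" using assms Th_sub by blast
  then show ?thesis by (simp add: th_join_def ccl_theory[OF cr])
qed

lemma th_act_Th: assumes a: "a \<subseteq> Subst L" and y: "y \<in> Th" shows "th_act ent a y \<in> Th"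
proof -
  have "sset a y \<subseteq> domain_of K L" by (rule sset_domain[OF Th_sub[OF y] a])
  then show ?thesis by (simp add: th_act_def ccl_theory[OF cr])
qed

lemma qmult_Subst1: assumes x: "x \<subseteq> Subst L1" and a: "a \<subseteq> Subst L" shows "qmult x a \<subseteq> Subst L1"
  by (rule qmult_Subst[OF x order_trans[OF a SS1]])

lemma gens_sub: "tensor_gens L L1 K ent \<subseteq> Pow SS \<times> Pow SS"
proof
  fix g assume "g \<in> tensor_gens L L1 K ent"
  then show "g \<in> Pow SS \<times> Pow SS" unfolding tensor_gens_def Let_def
  proof (elim UnE CollectE exE conjE)
    fix Xs y assume "g = ({(\<Union>Xs, y)}, (\<lambda>x. (x, y)) ` Xs)" "Xs \<subseteq> Pow (Subst L1)" "y \<in> Th"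
    then show ?thesis by blast
  next
    fix x Ys assume "g = ({(x, th_join ent Ys)}, (\<lambda>y. (x, y)) ` Ys)" "x \<in> Pow (Subst L1)" "Ys \<subseteq> Th"
    then show ?thesis using th_join_Th[of Ys] by blast
  next
    fix x a y assume "g = ({(qmult x (qemb a), y)}, {(x, th_act ent a y)})" "x \<in> Pow (Subst L1)"
      "a \<in> Pow (Subst L)" "y \<in> Th"
    then show ?thesis using th_act_Th[of a y] qmult_Subst1[of x a] by simp
  qed
qed

lemma RR_cong: "suplat_cong SS RR"
  unfolding tensor_rel_def by (rule cong_gen_cong[OF gens_sub])

lemma gens_RR: "tensor_gens L L1 K ent \<subseteq> RR"
  unfolding tensor_rel_def by (rule cong_gen_sub)

lemma gen1: assumes "Xs \<subseteq> Pow (Subst L1)" "y \<in> Th" shows "({(\<Union>Xs, y)}, (\<lambda>x. (x, y)) ` Xs) \<in> RR"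
proof -
  have "({(\<Union>Xs, y)}, (\<lambda>x. (x, y)) ` Xs) \<in> tensor_gens L L1 K ent"
    unfolding tensor_gens_def Let_def
    by (rule UnI1, rule UnI1, rule CollectI, rule exI[of _ Xs], rule exI[of _ y]) (simp add: assms)
  then show ?thesis using gens_RR by blast
qed

lemma gen2: assumes "x \<subseteq> Subst L1" "Ys \<subseteq> Th" shows "({(x, th_join ent Ys)}, (\<lambda>y. (x, y)) ` Ys) \<in> RR"
proof -
  have "({(x, th_join ent Ys)}, (\<lambda>y. (x, y)) ` Ys) \<in> tensor_gens L L1 K ent"
    unfolding tensor_gens_def Let_def
    by (rule UnI1, rule UnI2, rule CollectI, rule exI[of _ x], rule exI[of _ Ys]) (simp add: assms)
  then show ?thesis using gens_RR by blast
qed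

lemma gen3: assumes "x \<subseteq> Subst L1" "a \<subseteq> Subst L" "y \<in> Th"
  shows "({(qmult x a, y)}, {(x, th_act ent a y)}) \<in> RR"
proof -
  have "({(qmult x (qemb a), y)}, {(x, th_act ent a y)}) \<in> tensor_gens L L1 K ent"
    unfolding tensor_gens_def Let_def
    by (rule UnI2, rule CollectI, rule exI[of _ x], rule exI[of _ a], rule exI[of _ y]) (simp add: assms)
  then show ?thesis using gens_RR by auto
qed

lemma tval_sub: assumes P: "P \<subseteq> SS" shows "tval P \<subseteq> domain_of K L1"
  unfolding tval_def
proof (rule UN_least)
  fix p assume "p \<in> P"
  then have "p \<in> SS" using P by blast
  then have "fst p \<in> Pow (Subst L1)" "snd p \<in> Th" by (simp_all only: mem_Times_iff)
  then have "fst p \<subseteq> Subst L1" "snd p \<subseteq> domain_of K L1" using Th_sub DD1 by blast+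
  then show "sset (fst p) (snd p) \<subseteq> domain_of K L1" using sset_domain by blast
qed

definition ker :: "('c tpair set \<times> 'c tpair set) set" where
  "ker = {(P, Q). P \<subseteq> SS \<and> Q \<subseteq> SS \<and> ccl ent1 (tval P) = ccl ent1 (tval Q)}"

lemma ker_iff: "(P, Q) \<in> ker \<longleftrightarrow> P \<subseteq> SS \<and> Q \<subseteq> SS \<and> ccl ent1 (tval P) = ccl ent1 (tval Q)"
  by (simp add: ker_def)

lemma tval_UN: "tval (\<Union>i\<in>I. f i) = (\<Union>i\<in>I. tval (f i))"
  unfolding tval_def by blast

lemma ker_cong: "suplat_cong SS ker"
  unfolding suplat_cong_def
proof (intro conjI allI impI)
  show "equiv (Pow SS) ker"
  proof (rule equivI)
    show "ker \<subseteq> Pow SS \<times> Pow SS"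
    proof
      fix p assume "p \<in> ker" then show "p \<in> Pow SS \<times> Pow SS" by (cases p) (simp only: ker_iff mem_Times_iff Pow_iff fst_conv snd_conv)
    qed
    show "refl_on (Pow SS) ker" unfolding refl_on_def by (simp only: ker_iff Pow_iff) simp
    show "sym ker" unfolding sym_def by (simp only: ker_iff) metis
    show "trans ker" unfolding trans_def by (simp only: ker_iff) metis
  qed
  fix I assume I: "I \<subseteq> ker"
  have ki: "(fst i, snd i) \<in> ker" if "i \<in> I" for i using subsetD[OF I that] by simp
  have sub: "\<And>i. i \<in> I \<Longrightarrow> fst i \<subseteq> SS \<and> snd i \<subseteq> SS" using ki by (simp only: ker_iff)
  have eq: "\<And>i. i \<in> I \<Longrightarrow> ccl ent1 (tval (fst i)) = ccl ent1 (tval (snd i))" using ki by (simp only: ker_iff)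
  have tf: "\<And>i. i \<in> I \<Longrightarrow> tval (fst i) \<subseteq> domain_of K L1" using tval_sub[OF conjunct1[OF sub]] .
  have ts: "\<And>i. i \<in> I \<Longrightarrow> tval (snd i) \<subseteq> domain_of K L1" using tval_sub[OF conjunct2[OF sub]] .
  have "ccl ent1 (tval (\<Union>(fst ` I))) = ccl ent1 (\<Union>i\<in>I. tval (fst i))"
    by (rule arg_cong[where f="ccl ent1", OF tval_UN])
  also have "\<dots> = ccl ent1 (\<Union>i\<in>I. ccl ent1 (tval (fst i)))"
    by (rule ccl_Union[OF cr1, symmetric, OF tf])
  also have "\<dots> = ccl ent1 (\<Union>i\<in>I. ccl ent1 (tval (snd i)))"
    by (rule arg_cong[where f="ccl ent1"], rule SUP_cong[OF refl eq])
  also have "\<dots> = ccl ent1 (\<Union>i\<in>I. tval (snd i))"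
    by (rule ccl_Union[OF cr1, OF ts])
  also have "\<dots> = ccl ent1 (tval (\<Union>(snd ` I)))"
    by (rule arg_cong[where f="ccl ent1", OF tval_UN[symmetric]])
  finally have "ccl ent1 (tval (\<Union>(fst ` I))) = ccl ent1 (tval (\<Union>(snd ` I)))" .
  moreover have "\<Union>(fst ` I) \<subseteq> SS" "\<Union>(snd ` I) \<subseteq> SS" using sub by blast+
  ultimately show "(\<Union>(fst ` I), \<Union>(snd ` I)) \<in> ker" by (simp only: ker_iff)
qed

lemma tval_single: "tval {(x, y)} = sset x y"
  by (simp add: tval_def)

lemma gens_ker: "tensor_gens L L1 K ent \<subseteq> ker"
proof
  fix g assume g: "g \<in> tensor_gens L L1 K ent"
  have "g \<in> Pow SS \<times> Pow SS" using subsetD[OF gens_sub g] .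
  then have gS: "fst g \<subseteq> SS \<and> snd g \<subseteq> SS" by (simp only: mem_Times_iff Pow_iff)
  have "ccl ent1 (tval (fst g)) = ccl ent1 (tval (snd g))"
    using g unfolding tensor_gens_def Let_def
  proof (elim UnE CollectE exE conjE)
    fix Xs y assume "g = ({(\<Union>Xs, y)}, (\<lambda>x. (x, y)) ` Xs)"
    then have "tval (fst g) = tval (snd g)" by (simp add: tval_def sset_Union image_image)
    then show ?thesis by simp
  next
    fix x Ys assume g: "g = ({(x, th_join ent Ys)}, (\<lambda>y. (x, y)) ` Ys)" and x: "x \<in> Pow (Subst L1)"
      and Ys: "Ys \<subseteq> Th"
    have U: "\<Union>Ys \<subseteq> domain_of K L" using Ys Th_sub by blast
    have "tval (snd g) = sset x (\<Union>Ys)" using g by (simp add: tval_def sset_Union2 image_image)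
    moreover have "tval (fst g) = sset x (ccl ent (\<Union>Ys))" using g by (simp add: tval_def th_join_def)
    ultimately show ?thesis using mix_eq[OF _ U] x by (simp only: Pow_iff)
  next
    fix x a y assume g: "g = ({(qmult x (qemb a), y)}, {(x, th_act ent a y)})" and x: "x \<in> Pow (Subst L1)"
      and a: "a \<in> Pow (Subst L)" and y: "y \<in> Th"
    have U: "sset a y \<subseteq> domain_of K L" using sset_domain[of y K L a] a y Th_sub by blast
    have "tval (fst g) = sset x (sset a y)" using g by (simp add: tval_def sset_qmult)
    moreover have "tval (snd g) = sset x (ccl ent (sset a y))" using g by (simp add: tval_def th_act_def)
    ultimately show ?thesis using mix_eq[OF _ U] x by (simp only: Pow_iff)
  qed
  then have "(fst g, snd g) \<in> ker" using gS by (simp only: ker_iff)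
  then show "g \<in> ker" by simp
qed

lemma RR_ker: "RR \<subseteq> ker"
  unfolding tensor_rel_def by (rule cong_gen_least[OF ker_cong gens_ker])

end

definition canon :: "nat \<Rightarrow> nat \<Rightarrow> 'c elem" where
  "canon m n = (map Var [0..<m], map Var [m..<m+n])"

definition cn :: "'c elem \<Rightarrow> 'c elem" where
  "cn e = canon (length (fst e)) (length (snd e))"

definition tau_of :: "'c elem \<Rightarrow> 'c subst" where
  "tau_of e = (\<lambda>v. if v < length (fst e) then fst e ! v
      else if v < length (fst e) + length (snd e) then snd e ! (v - length (fst e)) else Var 0)"

lemma sact_canon: "sact \<sigma> (canon m n) = (map \<sigma> [0..<m], map \<sigma> [m..<m+n])"
  by (simp add: sact_def canon_def)

lemma sact_tau: "sact (tau_of e) (cn e) = e"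
proof -
  obtain xs ys where e: "e = (xs, ys)" by (cases e)
  have 1: "map (tau_of e) [0..<length xs] = xs"
    by (rule nth_equalityI) (simp_all add: tau_of_def e)
  have 2: "map (tau_of e) [length xs..<length xs + length ys] = ys"
    by (rule nth_equalityI) (simp_all add: tau_of_def e)
  show ?thesis using 1 2 by (simp add: cn_def sact_canon e)
qed

lemma dom_sets: "e \<in> domain_of K L \<Longrightarrow> set (fst e) \<subseteq> Fm L \<and> set (snd e) \<subseteq> Fm L"
  by (cases K) auto

lemma tau_Subst: assumes "e \<in> domain_of K L" shows "tau_of e \<in> Subst L"
proof -
  have "set (fst e) \<subseteq> Fm L" "set (snd e) \<subseteq> Fm L" using dom_sets[OF assms] by auto
  then show ?thesis unfolding Subst_def tau_of_def by (auto intro: Fm.Fm_Var)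
qed

lemma cn_dom: assumes "e \<in> domain_of K L" shows "cn e \<in> domain_of K L"
  using assms by (cases K) (auto simp: cn_def canon_def intro: Fm.Fm_Var)

lemma cn_sact: "cn (sact \<sigma> e) = cn e"
  by (simp add: cn_def sact_def)

lemma canon_fix: assumes "\<And>v. v < m + n \<Longrightarrow> \<kappa> v = Var v" shows "sact \<kappa> (canon m n) = canon m n"
proof -
  have h: "map \<kappa> [0..<m] = map Var [0..<m]" "map \<kappa> [m..<m+n] = map Var [m..<m+n]"
    unfolding map_eq_conv using assms by auto
  show ?thesis by (subst sact_canon) (simp only: h canon_def)
qed

context ext
begin

definition sp :: "'c subst \<Rightarrow> 'c elem \<Rightarrow> 'c tpair set" where
  "sp \<rho> d = {({\<rho>}, ccl ent {d})}"

lemma RRsym: "(P, Q) \<in> RR \<Longrightarrow> (Q, P) \<in> RR" using R_sym[OF RR_cong] .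
lemma RRtrans: "(P, Q) \<in> RR \<Longrightarrow> (Q, W) \<in> RR \<Longrightarrow> (P, W) \<in> RR" using R_trans[OF RR_cong] .

lemma step:
  assumes r: "\<rho> \<in> Subst L1" and t: "\<tau> \<in> Subst L" and d: "d \<in> domain_of K L"
  shows "(sp \<rho> (sact \<tau> d), sp (scomp \<rho> \<tau>) d) \<in> RR"
proof -
  have y: "ccl ent {d} \<in> Th" using ccl_theory[OF cr] d by simp
  have "({(qmult {\<rho>} {\<tau>}, ccl ent {d})}, {({\<rho>}, th_act ent {\<tau>} (ccl ent {d}))}) \<in> RR"
    by (rule gen3) (use r t y in auto)
  moreover have "th_act ent {\<tau>} (ccl ent {d}) = ccl ent {sact \<tau> d}"
    unfolding th_act_def using ccl_sset_eq[OF cr, of "{\<tau>}" "{d}"] t d by (simp add: sset_single)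
  ultimately show ?thesis unfolding sp_def by (simp add: qmult_single RRsym)
qed

lemma agree:
  assumes a: "\<alpha> \<in> Subst L1" and b: "\<beta> \<in> Subst L1" and c: "canon m n \<in> domain_of K L"
    and eq: "sact \<alpha> (canon m n) = sact \<beta> (canon m n)"
  shows "(sp \<alpha> (canon m n), sp \<beta> (canon m n)) \<in> RR"
proof -
  define N where "N = m + n"
  have ab: "\<And>v. v < N \<Longrightarrow> \<alpha> v = \<beta> v"
  proof -
    fix v assume v: "v < N"
    have "map \<alpha> [0..<m] = map \<beta> [0..<m]" "map \<alpha> [m..<m+n] = map \<beta> [m..<m+n]"
      using eq by (simp_all add: sact_canon)
    then show "\<alpha> v = \<beta> v" using v unfolding N_def map_eq_conv
      by (cases "v < m") auto
  qed
  define \<kappa> :: "'c subst" where "\<kappa> = (\<lambda>v. if v < N then Var v else Var N)"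
  define \<kappa>' :: "'c subst" where "\<kappa>' = (\<lambda>v. if v < N then Var v else Var (Suc N))"
  define \<mu> where "\<mu> = (\<lambda>v. if v \<le> N then \<alpha> v else \<beta> v)"
  have kS: "\<kappa> \<in> Subst L" "\<kappa>' \<in> Subst L" unfolding \<kappa>_def \<kappa>'_def Subst_def by (auto intro: Fm.Fm_Var)
  have mS: "\<mu> \<in> Subst L1" using a b unfolding \<mu>_def Subst_def by auto
  have kf: "sact \<kappa> (canon m n) = canon m n" "sact \<kappa>' (canon m n) = canon m n"
    by (rule canon_fix, simp add: \<kappa>_def \<kappa>'_def N_def)+
  have e1: "scomp \<alpha> \<kappa> = scomp \<mu> \<kappa>"
    unfolding scomp_def \<kappa>_def \<mu>_def by (rule ext) simp
  have e2: "scomp \<mu> \<kappa>' = scomp \<beta> \<kappa>'"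
    unfolding scomp_def \<kappa>'_def \<mu>_def using ab by (intro ext) simp
  have s1: "(sp \<alpha> (canon m n), sp (scomp \<alpha> \<kappa>) (canon m n)) \<in> RR"
    using step[OF a kS(1) c] kf(1) by simp
  have s2: "(sp \<mu> (canon m n), sp (scomp \<mu> \<kappa>) (canon m n)) \<in> RR"
    using step[OF mS kS(1) c] kf(1) by simp
  have s3: "(sp \<mu> (canon m n), sp (scomp \<mu> \<kappa>') (canon m n)) \<in> RR"
    using step[OF mS kS(2) c] kf(2) by simp
  have s4: "(sp \<beta> (canon m n), sp (scomp \<beta> \<kappa>') (canon m n)) \<in> RR"
    using step[OF b kS(2) c] kf(2) by simp
  have "(sp \<alpha> (canon m n), sp \<mu> (canon m n)) \<in> RR"
    using RRtrans[OF s1] RRsym[OF s2] e1 by simp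
  moreover have "(sp \<mu> (canon m n), sp \<beta> (canon m n)) \<in> RR"
    using RRtrans[OF s3] RRsym[OF s4] e2 by simp
  ultimately show ?thesis using RRtrans by blast
qed

lemma core:
  assumes r: "\<rho> \<in> Subst L1" and s: "\<sigma> \<in> Subst L1" and d: "d \<in> domain_of K L" and z: "z \<in> domain_of K L"
    and eq: "sact \<rho> d = sact \<sigma> z"
  shows "(sp \<rho> d, sp \<sigma> z) \<in> RR"
proof -
  have cc: "cn z = cn d" using cn_sact[of \<rho> d] cn_sact[of \<sigma> z] eq by simp
  have td: "tau_of d \<in> Subst L" and tz: "tau_of z \<in> Subst L" using tau_Subst d z by blast+
  have cd: "cn d \<in> domain_of K L" using cn_dom[OF d] .
  have 1: "(sp \<rho> d, sp (scomp \<rho> (tau_of d)) (cn d)) \<in> RR"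
    using step[OF r td cd] sact_tau[of d] by simp
  have 2: "(sp \<sigma> z, sp (scomp \<sigma> (tau_of z)) (cn d)) \<in> RR"
    using step[OF s tz cd] sact_tau[of z] cc by simp
  have "sact (scomp \<rho> (tau_of d)) (cn d) = sact (scomp \<sigma> (tau_of z)) (cn d)"
    using eq sact_tau[of d] sact_tau[of z] cc by (simp add: sact_comp[symmetric])
  then have 3: "(sp (scomp \<rho> (tau_of d)) (cn d), sp (scomp \<sigma> (tau_of z)) (cn d)) \<in> RR"
    using agree[OF scomp_Subst[OF r] scomp_Subst[OF s]] td tz SS1 cd unfolding cn_def by blast
  show ?thesis using RRtrans[OF 1 RRtrans[OF 3 RRsym[OF 2]]] .
qed

end

context ext
begin

definition lle :: "'c tpair set \<Rightarrow> 'c tpair set \<Rightarrow> bool" where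
  "lle P Q \<longleftrightarrow> (P \<union> Q, Q) \<in> RR"

lemma lle_R: "(P, Q) \<in> RR \<Longrightarrow> lle P Q"
  using le_R[OF RR_cong] unfolding Submission.le_def[OF RR_cong] lle_def .
lemma lle_subset: "P \<subseteq> Q \<Longrightarrow> Q \<subseteq> SS \<Longrightarrow> lle P Q"
  using le_subset[OF RR_cong] unfolding Submission.le_def[OF RR_cong] lle_def .
lemma lle_trans: "lle P Q \<Longrightarrow> lle Q W \<Longrightarrow> lle P W"
  using le_trans[OF RR_cong] unfolding Submission.le_def[OF RR_cong] lle_def .
lemma lle_UN: "(\<And>i. i \<in> I \<Longrightarrow> lle (f i) Q) \<Longrightarrow> Q \<subseteq> SS \<Longrightarrow> lle (\<Union>i\<in>I. f i) Q"
  using le_UN[OF RR_cong] unfolding Submission.le_def[OF RR_cong] lle_def .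
lemma lle_antisym: "lle P Q \<Longrightarrow> lle Q P \<Longrightarrow> (P, Q) \<in> RR"
  using le_antisym[OF RR_cong] unfolding Submission.le_def[OF RR_cong] lle_def .
lemma lle_sub: "lle P Q \<Longrightarrow> P \<subseteq> SS \<and> Q \<subseteq> SS"
  using le_sub[OF RR_cong] unfolding Submission.le_def[OF RR_cong] lle_def .

lemma ccl_single_Th: "d \<in> domain_of K L \<Longrightarrow> ccl ent {d} \<in> Th"
  using ccl_theory[OF cr, of "{d}"] by simp

lemma Th_ccl: "y \<in> Th \<Longrightarrow> ccl ent y = y"
  by (simp add: theories_def)

lemma decomp1:
  assumes x: "x \<subseteq> Subst L1" and y: "y \<in> Th"
  shows "({(x, y)}, (\<lambda>\<sigma>. ({\<sigma>}, y)) ` x) \<in> RR"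
proof -
  have "({(\<Union>((\<lambda>\<sigma>. {\<sigma>}) ` x), y)}, (\<lambda>x'. (x', y)) ` ((\<lambda>\<sigma>. {\<sigma>}) ` x)) \<in> RR"
    by (rule gen1) (use x y in auto)
  moreover have "\<Union>((\<lambda>\<sigma>. {\<sigma>}) ` x) = x" by blast
  ultimately show ?thesis by (simp add: image_image)
qed

lemma decomp2:
  assumes x: "x \<subseteq> Subst L1" and \<Psi>: "\<Psi> \<subseteq> domain_of K L"
  shows "({(x, ccl ent \<Psi>)}, (\<lambda>\<psi>. (x, ccl ent {\<psi>})) ` \<Psi>) \<in> RR"
proof -
  have Ys: "(\<lambda>\<psi>. ccl ent {\<psi>}) ` \<Psi> \<subseteq> Th" using ccl_single_Th \<Psi> by blast
  have "({(x, th_join ent ((\<lambda>\<psi>. ccl ent {\<psi>}) ` \<Psi>))}, (\<lambda>y. (x, y)) ` ((\<lambda>\<psi>. ccl ent {\<psi>}) ` \<Psi>)) \<in> RR"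
    by (rule gen2[OF x Ys])
  moreover have "th_join ent ((\<lambda>\<psi>. ccl ent {\<psi>}) ` \<Psi>) = ccl ent \<Psi>"
  proof -
    have "th_join ent ((\<lambda>\<psi>. ccl ent {\<psi>}) ` \<Psi>) = ccl ent (\<Union>\<psi>\<in>\<Psi>. ccl ent {\<psi>})"
      by (simp add: th_join_def)
    also have "\<dots> = ccl ent (\<Union>\<psi>\<in>\<Psi>. {\<psi>})" by (rule ccl_Union[OF cr]) (use \<Psi> in blast)
    finally show ?thesis by simp
  qed
  ultimately show ?thesis by (simp add: image_image)
qed

lemma mono2:
  assumes x: "x \<subseteq> Subst L1" and y': "y' \<in> Th" and y: "y \<in> Th" and sub: "y' \<subseteq> y"
  shows "lle {(x, y')} {(x, y)}"
proof -
  have "({(x, th_join ent {y', y})}, (\<lambda>z. (x, z)) ` {y', y}) \<in> RR"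
    by (rule gen2[OF x]) (use y y' in blast)
  moreover have "th_join ent {y', y} = y" using sub Th_ccl[OF y] by (simp add: th_join_def Un_absorb1)
  ultimately have "({(x, y)}, {(x, y'), (x, y)}) \<in> RR" by simp
  then have "lle {(x, y'), (x, y)} {(x, y)}" using lle_R RRsym by blast
  moreover have "lle {(x, y')} {(x, y'), (x, y)}"
    by (rule lle_subset) (use x y y' in auto)
  ultimately show ?thesis using lle_trans by blast
qed

definition Nset :: "'c elem set \<Rightarrow> 'c tpair set" where
  "Nset C = {p \<in> SS. sset (fst p) (snd p) \<subseteq> C}"

lemma Nset_sub: "Nset C \<subseteq> SS"
  unfolding Nset_def by blast

lemma SS_mem: "p \<in> SS \<Longrightarrow> fst p \<subseteq> Subst L1 \<and> snd p \<in> Th"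
  by (simp only: mem_Times_iff Pow_iff)

lemma pair_SS: "x \<subseteq> Subst L1 \<Longrightarrow> y \<in> Th \<Longrightarrow> (x, y) \<in> SS"
  by (simp only: mem_Times_iff Pow_iff fst_conv snd_conv)

lemma img_SS: "x \<subseteq> Subst L1 \<Longrightarrow> y \<in> Th \<Longrightarrow> (\<lambda>\<sigma>. ({\<sigma>}, y)) ` x \<subseteq> SS"
proof
  fix q assume "x \<subseteq> Subst L1" "y \<in> Th" "q \<in> (\<lambda>\<sigma>. ({\<sigma>}, y)) ` x"
  then obtain \<sigma> where "\<sigma> \<in> x" "q = ({\<sigma>}, y)" by blast
  then show "q \<in> SS" using pair_SS[of "{\<sigma>}" y] \<open>x \<subseteq> Subst L1\<close> \<open>y \<in> Th\<close> by blast
qed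

lemma sp_sub: "\<rho> \<in> Subst L1 \<Longrightarrow> d \<in> domain_of K L \<Longrightarrow> sp \<rho> d \<subseteq> SS"
  unfolding sp_def using pair_SS[of "{\<rho>}" "ccl ent {d}"] ccl_single_Th by simp

lemma key:
  assumes P: "P \<subseteq> SS"
  shows "(P, Nset (ccl ent1 (tval P))) \<in> RR"
proof -
  define \<Gamma> where "\<Gamma> = ccl ent1 (tval P)"
  define W where "W = {e \<in> domain_of K L1. \<exists>\<rho> d. \<rho> \<in> Subst L1 \<and> d \<in> domain_of K L \<and> sact \<rho> d = e \<and> lle (sp \<rho> d) P}"
  have tP: "tval P \<subseteq> domain_of K L1" using tval_sub[OF P] .
  have corele: "lle (sp \<sigma> z) P" if s: "\<sigma> \<in> Subst L1" and z: "z \<in> domain_of K L" and e: "sact \<sigma> z \<in> W" for \<sigma> z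
  proof -
    obtain \<rho> d where "\<rho> \<in> Subst L1" "d \<in> domain_of K L" "sact \<rho> d = sact \<sigma> z" "lle (sp \<rho> d) P"
      using e unfolding W_def by blast
    then show ?thesis using lle_trans[OF lle_R[OF core[OF s \<open>\<rho> \<in> Subst L1\<close> z \<open>d \<in> domain_of K L\<close>]]] by simp
  qed
  have a: "tval P \<subseteq> W"
  proof
    fix e assume "e \<in> tval P"
    then obtain p where p: "p \<in> P" and e: "e \<in> sset (fst p) (snd p)" unfolding tval_def by blast
    then obtain \<sigma> z where \<sigma>: "\<sigma> \<in> fst p" and z: "z \<in> snd p" and ez: "e = sact \<sigma> z" by (auto elim!: sset_E)
    have pS: "p \<in> SS" using p P by blast
    have x: "fst p \<subseteq> Subst L1" and y: "snd p \<in> Th" using SS_mem[OF pS] by auto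
    have zD: "z \<in> domain_of K L" using z y Th_sub by blast
    have sS: "\<sigma> \<in> Subst L1" using x \<sigma> by blast
    have "ccl ent {z} \<subseteq> snd p" using ccl_mono[OF cr, of "{z}" "snd p"] z Th_sub[OF y] Th_ccl[OF y] by simp
    then have 1: "lle (sp \<sigma> z) {({\<sigma>}, snd p)}"
      unfolding sp_def using mono2[of "{\<sigma>}" "ccl ent {z}" "snd p"] sS ccl_single_Th[OF zD] y by blast
    have "lle ((\<lambda>\<sigma>. ({\<sigma>}, snd p)) ` fst p) {(fst p, snd p)}"
      using lle_R[OF RRsym[OF decomp1[OF x y]]] .
    moreover have "lle {({\<sigma>}, snd p)} ((\<lambda>\<sigma>. ({\<sigma>}, snd p)) ` fst p)"
      by (rule lle_subset[OF _ img_SS[OF x y]]) (use \<sigma> in blast)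
    ultimately have 2: "lle {({\<sigma>}, snd p)} {p}" using lle_trans by simp
    have 3: "lle {p} P" by (rule lle_subset[OF _ P]) (use p in blast)
    have "lle (sp \<sigma> z) P" using lle_trans[OF 1 lle_trans[OF 2 3]] .
    moreover have "e \<in> domain_of K L1" using \<open>e \<in> tval P\<close> tP by blast
    ultimately show "e \<in> W" unfolding W_def using sS zD ez by blast
  qed
  have b: "closed1 W"
  proof (rule closed1I)
    show "W \<subseteq> domain_of K L1" unfolding W_def by blast
    fix \<rho> \<Psi> \<chi> assume r: "\<rho> \<in> Subst L1" and e: "ent \<Psi> \<chi>" and sub: "sset {\<rho>} \<Psi> \<subseteq> W"
    have \<Psi>: "\<Psi> \<subseteq> domain_of K L" and \<chi>: "\<chi> \<in> domain_of K L" using cr_D[OF cr e] by auto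
    have "{\<chi>} \<subseteq> ccl ent \<Psi>" using e by (simp add: ccl_def)
    then have "ccl ent {\<chi>} \<subseteq> ccl ent \<Psi>" using ccl_least[OF cr _ \<Psi>] Th_ccl by blast
    then have 1: "lle (sp \<rho> \<chi>) {({\<rho>}, ccl ent \<Psi>)}"
      unfolding sp_def using mono2[of "{\<rho>}" "ccl ent {\<chi>}" "ccl ent \<Psi>"] r ccl_single_Th[OF \<chi>] ccl_theory[OF cr \<Psi>] by blast
    have 2: "lle {({\<rho>}, ccl ent \<Psi>)} ((\<lambda>\<psi>. ({\<rho>}, ccl ent {\<psi>})) ` \<Psi>)"
      using lle_R[OF decomp2[OF _ \<Psi>]] r by simp
    have "(\<lambda>\<psi>. ({\<rho>}, ccl ent {\<psi>})) ` \<Psi> = (\<Union>\<psi>\<in>\<Psi>. sp \<rho> \<psi>)" unfolding sp_def by blast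
    moreover have "lle (\<Union>\<psi>\<in>\<Psi>. sp \<rho> \<psi>) P"
    proof (rule lle_UN)
      show "P \<subseteq> SS" using P .
      fix \<psi> assume "\<psi> \<in> \<Psi>"
      then have "sact \<rho> \<psi> \<in> W" using sub sset_I[of \<rho> "{\<rho>}" \<psi> \<Psi>] by blast
      then show "lle (sp \<rho> \<psi>) P" using corele r \<Psi> \<open>\<psi> \<in> \<Psi>\<close> by blast
    qed
    ultimately have "lle (sp \<rho> \<chi>) P" using lle_trans[OF 1 lle_trans[OF 2]] by simp
    moreover have "sact \<rho> \<chi> \<in> domain_of K L1" using sact_domain[OF _ r] \<chi> DD1 by blast
    ultimately show "sact \<rho> \<chi> \<in> W" unfolding W_def using r \<chi> by blast
  qed
  have c: "\<Gamma> \<subseteq> W"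
  proof
    fix e assume "e \<in> \<Gamma>"
    then have "ent1 (tval P) e" unfolding \<Gamma>_def ccl_def by simp
    then show "e \<in> W" using a b unfolding ent1_def by blast
  qed
  have d: "lle (Nset \<Gamma>) P"
  proof -
    have "lle {p} P" if p: "p \<in> Nset \<Gamma>" for p
    proof -
      have "p \<in> SS \<and> sset (fst p) (snd p) \<subseteq> \<Gamma>" using p unfolding Nset_def by (simp only: mem_Collect_eq)
      then have pS: "p \<in> SS" and pG: "sset (fst p) (snd p) \<subseteq> \<Gamma>" by (rule conjunct1, rule conjunct2)
      have x: "fst p \<subseteq> Subst L1" and y: "snd p \<in> Th" using SS_mem[OF pS] by auto
      have yD: "snd p \<subseteq> domain_of K L" using Th_sub[OF y] .
      have "lle {({\<sigma>}, snd p)} P" if \<sigma>: "\<sigma> \<in> fst p" for \<sigma>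
      proof -
        have sS: "\<sigma> \<in> Subst L1" using x \<sigma> by blast
        have "({({\<sigma>}, ccl ent (snd p))}, (\<lambda>\<psi>. ({\<sigma>}, ccl ent {\<psi>})) ` snd p) \<in> RR"
          using decomp2[OF _ yD] sS by simp
        moreover have "(\<lambda>\<psi>. ({\<sigma>}, ccl ent {\<psi>})) ` snd p = (\<Union>z\<in>snd p. sp \<sigma> z)"
          unfolding sp_def by blast
        ultimately have 1: "lle {({\<sigma>}, snd p)} (\<Union>z\<in>snd p. sp \<sigma> z)"
          using Th_ccl[OF y] lle_R by simp
        have "lle (\<Union>z\<in>snd p. sp \<sigma> z) P"
        proof (rule lle_UN[OF _ P])
          fix z assume z: "z \<in> snd p"
          have "sact \<sigma> z \<in> sset (fst p) (snd p)" using sset_I[OF \<sigma> z] .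
          then have "sact \<sigma> z \<in> W" using pG c by blast
          then show "lle (sp \<sigma> z) P" using corele sS z yD by blast
        qed
        then show ?thesis using lle_trans[OF 1] by blast
      qed
      then have "lle (\<Union>\<sigma>\<in>fst p. {({\<sigma>}, snd p)}) P" by (rule lle_UN[OF _ P])
      moreover have "(\<Union>\<sigma>\<in>fst p. {({\<sigma>}, snd p)}) = (\<lambda>\<sigma>. ({\<sigma>}, snd p)) ` fst p" by blast
      moreover have "lle {p} ((\<lambda>\<sigma>. ({\<sigma>}, snd p)) ` fst p)" using lle_R[OF decomp1[OF x y]] by simp
      ultimately show ?thesis using lle_trans[of "{p}" "(\<lambda>\<sigma>. ({\<sigma>}, snd p)) ` fst p" P] by simp
    qed
    then have "lle (\<Union>p\<in>Nset \<Gamma>. {p}) P" by (rule lle_UN[OF _ P])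
    then show ?thesis by simp
  qed
  have e: "lle P (Nset \<Gamma>)"
  proof (rule lle_subset[OF _ Nset_sub])
    have "tval P \<subseteq> \<Gamma>" unfolding \<Gamma>_def using ccl_ext[OF cr1 tP] .
    show "P \<subseteq> Nset \<Gamma>"
    proof
      fix p assume p: "p \<in> P"
      then have "sset (fst p) (snd p) \<subseteq> tval P" unfolding tval_def by blast
      then show "p \<in> Nset \<Gamma>" unfolding Nset_def using p P \<open>tval P \<subseteq> \<Gamma>\<close> by blast
    qed
  qed
  show ?thesis using lle_antisym[OF e d] unfolding \<Gamma>_def .
qed

end

lemma cn_dom_any: assumes "e \<in> domain_of K L'" shows "cn e \<in> domain_of K L"
  using assms by (cases K) (auto simp: cn_def canon_def intro: Fm.Fm_Var)

context ext
begin

abbreviation Th1 where "Th1 \<equiv> theories (domain_of K L1) ent1"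

definition fmap :: "'c elem set \<Rightarrow> 'c tpair set set" where
  "fmap C = RR `` {Nset C}"

lemma Th1_D: "C \<in> Th1 \<Longrightarrow> C \<subseteq> domain_of K L1 \<and> ccl ent1 C = C"
  by (simp add: theories_def)

lemma tval_Nset: assumes C: "C \<in> Th1" shows "tval (Nset C) = C"
proof (rule subset_antisym)
  show "tval (Nset C) \<subseteq> C" unfolding tval_def Nset_def by blast
  show "C \<subseteq> tval (Nset C)"
  proof
    fix e assume e: "e \<in> C"
    have CD: "C \<subseteq> domain_of K L1" and Cc: "ccl ent1 C = C" using Th1_D[OF C] by auto
    have eD: "e \<in> domain_of K L1" using e CD by blast
    define \<rho> where "\<rho> = tau_of e"
    define d where "d = cn e"
    have r: "\<rho> \<in> Subst L1" unfolding \<rho>_def using tau_Subst[OF eD] .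
    have d: "d \<in> domain_of K L" unfolding d_def using cn_dom_any[OF eD] .
    have rd: "sact \<rho> d = e" unfolding \<rho>_def d_def using sact_tau .
    have "sset {\<rho>} (ccl ent {d}) \<subseteq> ccl ent1 (sset {\<rho>} {d})"
      using mix_sub[of "{\<rho>}" "{d}"] r d by simp
    also have "\<dots> = ccl ent1 {e}" using rd by (simp add: sset_single)
    also have "\<dots> \<subseteq> ccl ent1 C" using ccl_mono[OF cr1, of "{e}" C] e CD by simp
    finally have sub: "sset {\<rho>} (ccl ent {d}) \<subseteq> C" using Cc by simp
    have pS: "({\<rho>}, ccl ent {d}) \<in> SS" using pair_SS[of "{\<rho>}" "ccl ent {d}"] r ccl_single_Th[OF d] by simp
    have pN: "({\<rho>}, ccl ent {d}) \<in> Nset C" unfolding Nset_def using pS sub by simp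
    have "d \<in> ccl ent {d}" using ccl_ext[OF cr, of "{d}"] d by simp
    then have es: "e \<in> sset {\<rho>} (ccl ent {d})" using sset_I[of \<rho> "{\<rho>}" d "ccl ent {d}"] rd by simp
    show "e \<in> tval (Nset C)" unfolding tval_def by (rule UN_I[OF pN]) (simp add: es)
  qed
qed

lemma RRequiv: "equiv (Pow SS) RR" using R_equiv[OF RR_cong] .

lemma rep_in: assumes "C \<in> Th1" shows "(Nset C, SOME Y. Y \<in> fmap C) \<in> RR"
proof -
  have "Nset C \<in> fmap C" unfolding fmap_def
    using equiv_class_self[OF RRequiv] Nset_sub by blast
  then have "(SOME Y. Y \<in> fmap C) \<in> fmap C" by (rule someI)
  then show ?thesis unfolding fmap_def by simp
qed

lemma fmap_eq: "(Nset C, P) \<in> RR \<Longrightarrow> fmap C = RR `` {P}"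
  unfolding fmap_def by (rule equiv_class_eq[OF RRequiv])

lemma iso_img: "fmap ` Th1 = Pow SS // RR"
proof (rule set_eqI iffI)+
  fix c assume "c \<in> fmap ` Th1"
  then obtain C where "c = fmap C" by blast
  moreover have "Nset C \<in> Pow SS" using Nset_sub by (simp only: Pow_iff)
  ultimately show "c \<in> Pow SS // RR" unfolding fmap_def by (simp add: quotientI)
next
  fix c assume "c \<in> Pow SS // RR"
  then obtain P where P0: "P \<in> Pow SS" and c: "c = RR `` {P}" by (rule quotientE) blast
  have P: "P \<subseteq> SS" using P0 by (simp only: Pow_iff)
  define C where "C = ccl ent1 (tval P)"
  have CT: "C \<in> Th1" unfolding C_def by (rule ccl_theory[OF cr1 tval_sub[OF P]])
  have "(Nset C, P) \<in> RR" using RRsym[OF key[OF P]] unfolding C_def .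
  then have "fmap C = c" using fmap_eq c by simp
  then show "c \<in> fmap ` Th1" using CT by blast
qed

lemma iso_inj: "inj_on fmap Th1"
proof (rule inj_onI)
  fix C C' assume C: "C \<in> Th1" and C': "C' \<in> Th1" and eq: "fmap C = fmap C'"
  have "Nset C' \<in> fmap C'" unfolding fmap_def
    using equiv_class_self[OF RRequiv] Nset_sub by blast
  then have "Nset C' \<in> RR `` {Nset C}" using eq unfolding fmap_def by simp
  then have "(Nset C, Nset C') \<in> RR" by simp
  then have "(Nset C, Nset C') \<in> ker" using RR_ker by blast
  then have "ccl ent1 (tval (Nset C)) = ccl ent1 (tval (Nset C'))" by (simp only: ker_iff)
  then show "C = C'" using tval_Nset[OF C] tval_Nset[OF C'] Th1_D[OF C] Th1_D[OF C'] by simp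
qed

lemma iso_join: assumes X: "X \<subseteq> Th1"
  shows "fmap (th_join ent1 X) = tensor_join L L1 K ent (fmap ` X)"
proof -
  define Pu where "Pu = (\<Union>C\<in>X. Nset C)"
  have Pu: "Pu \<subseteq> SS" unfolding Pu_def using Nset_sub by blast
  have "tval Pu = (\<Union>C\<in>X. tval (Nset C))" unfolding Pu_def by (rule tval_UN)
  also have "\<dots> = \<Union>X" using tval_Nset X by auto
  finally have tPu: "tval Pu = \<Union>X" .
  have 1: "(Pu, Nset (th_join ent1 X)) \<in> RR" using key[OF Pu] tPu by (simp add: th_join_def)
  have 2: "(Pu, \<Union>C\<in>X. (SOME Y. Y \<in> fmap C)) \<in> RR"
    unfolding Pu_def by (rule R_UN[OF RR_cong]) (use rep_in X in blast)
  have "(Nset (th_join ent1 X), \<Union>C\<in>X. (SOME Y. Y \<in> fmap C)) \<in> RR"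
    using RRtrans[OF RRsym[OF 1] 2] .
  then have "fmap (th_join ent1 X) = RR `` {\<Union>C\<in>X. (SOME Y. Y \<in> fmap C)}" by (rule fmap_eq)
  then show ?thesis unfolding tensor_join_def by (simp add: image_image)
qed

lemma tval_qimg: "tval ((\<lambda>p. (qmult q (fst p), snd p)) ` Y) = sset q (tval Y)"
proof -
  have "tval ((\<lambda>p. (qmult q (fst p), snd p)) ` Y) = (\<Union>p\<in>Y. sset (qmult q (fst p)) (snd p))"
    unfolding tval_def by (simp add: image_image)
  also have "\<dots> = (\<Union>p\<in>Y. sset q (sset (fst p) (snd p)))" by (simp add: sset_qmult)
  also have "\<dots> = sset q (tval Y)" unfolding tval_def sset_Union2 by (simp add: image_image)
  finally show ?thesis .
qed

lemma iso_act: assumes q: "q \<in> Pow (Subst L1)" and C: "C \<in> Th1"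
  shows "fmap (th_act ent1 q C) = tensor_act L L1 K ent q (fmap C)"
proof -
  define Y where "Y = (SOME Y. Y \<in> fmap C)"
  have NY: "(Nset C, Y) \<in> RR" unfolding Y_def using rep_in[OF C] .
  have Y: "Y \<subseteq> SS" using R_sub[OF RR_cong NY] by blast
  define qY where "qY = (\<lambda>p. (qmult q (fst p), snd p)) ` Y"
  have qY_eq: "qY = {(qmult q x, y) | x y. (x, y) \<in> Y}" unfolding qY_def by force
  have qS: "q \<subseteq> Subst L1" using q by simp
  have qYS: "qY \<subseteq> SS"
  proof
    fix p' assume "p' \<in> qY"
    then obtain p where p: "p \<in> Y" and p': "p' = (qmult q (fst p), snd p)" unfolding qY_def by blast
    have "p \<in> SS" using p Y by blast
    then have "fst p \<subseteq> Subst L1" "snd p \<in> Th" using SS_mem by auto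
    then show "p' \<in> SS" using p' pair_SS qmult_Subst[OF qS] by simp
  qed
  have tY: "tval Y \<subseteq> domain_of K L1" using tval_sub[OF Y] .
  have "(Nset C, Y) \<in> ker" using NY RR_ker by blast
  then have "ccl ent1 (tval Y) = ccl ent1 (tval (Nset C))" by (simp only: ker_iff)
  also have "\<dots> = C" using tval_Nset[OF C] Th1_D[OF C] by simp
  finally have cY: "ccl ent1 (tval Y) = C" .
  have "ccl ent1 (tval qY) = ccl ent1 (sset q (tval Y))" unfolding qY_def tval_qimg ..
  also have "\<dots> = ccl ent1 (sset q (ccl ent1 (tval Y)))" using ccl_sset_eq[OF cr1 qS tY] by simp
  also have "\<dots> = th_act ent1 q C" using cY by (simp add: th_act_def)
  finally have tq: "ccl ent1 (tval qY) = th_act ent1 q C" .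
  have "(Nset (th_act ent1 q C), qY) \<in> RR" using RRsym[OF key[OF qYS]] tq by simp
  then have "fmap (th_act ent1 q C) = RR `` {qY}" by (rule fmap_eq)
  then show ?thesis unfolding tensor_act_def Y_def[symmetric] qY_eq .
qed

lemma iso: "module_iso (Pow (Subst L1)) Th1 (th_join ent1) (th_act ent1)
   (tensor_carrier L L1 K ent) (tensor_join L L1 K ent) (tensor_act L L1 K ent) fmap"
  unfolding module_iso_def tensor_carrier_def bij_betw_def
proof (intro conjI allI impI ballI iso_inj iso_img)
  show "X \<subseteq> Th1 \<Longrightarrow> fmap (th_join ent1 X) = tensor_join L L1 K ent (fmap ` X)" for X by (rule iso_join)
  show "q \<in> Pow (Subst L1) \<Longrightarrow> x \<in> Th1 \<Longrightarrow> fmap (th_act ent1 q x) = tensor_act L L1 K ent q (fmap x)" for q x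
    by (rule iso_act)
qed

end

theorem proposition3p2:
  fixes L L1 :: "'c lang" and K :: dkind and ent :: "'c elem set \<Rightarrow> 'c elem \<Rightarrow> bool"
  assumes "expansion L L1"
    and "consequence_relation L K ent"
  shows "\<exists>ent1. consequence_relation L1 K ent1 \<and>
           (\<exists>f. module_iso (Pow (Subst L1))
                  (theories (domain_of K L1) ent1) (th_join ent1) (th_act ent1)
                  (tensor_carrier L L1 K ent) (tensor_join L L1 K ent) (tensor_act L L1 K ent) f)"
proof -
  interpret ext L L1 K ent using assms by unfold_locales
  show ?thesis by (rule exI[of _ ent1], rule conjI[OF cr1], rule exI[of _ fmap], rule iso)
qed

end
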